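(* Let $n\ge 1$ and let $\delta, s$ be nonnegative integers with $s \le s_{\mathrm{lim}} := n-\delta-1$. Let $A \in \mathbb{R}^{n\times n}$ be symmetric, and suppose there is a permutation matrix $\Pi\in\mathcal{P}_n$ such that $\Pi A \Pi^T \in \mathcal{M}_n(\delta,s)$. Then: (i) $\Pi$, together with some $S\in\mathcal{R}^n$, is an optimal solution of the Robust Seriation problem with the entrywise $\ell_1$ norm, $$\min_{\Pi'\in\mathcal{P}_n,\; S\in\mathcal{R}^n} \; \sum_{i,j=1}^n \big|S_{ij} - (\Pi' A \Pi'^T)_{ij}\big|;$$ (ii) the ordering given by $\Pi$ is an optimal solution of the problem R2SUM($\lambda$) with $\lambda=\delta^2$, $$\min_{x\in\mathcal{P}_n} \; \sum_{i,j=1}^n A_{ij}\,\min\big(\lambda,\; |x_i-x_j|^2\big),$$ where the ordering given by $\Pi$ is the permutation vector $x$ with $x_{\pi(k)}=k$ for all $k$ (element $\pi(k)$ is placed at position $k$), $\pi$ being the permutation with $\Pi_{ij}=1$ iff $\pi(i)=j$.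
   Context: $\mathcal{P}_n$ denotes the set of permutations of $\{1,\dots,n\}$, represented either as permutation vectors $x\in\mathbb{R}^n$ (a rearrangement of $(1,\dots,n)$) or as permutation matrices $\Pi\in\{0,1\}^{n\times n}$ with $\Pi_{ij}=1$ iff $\pi(i)=j$; then $(\Pi A\Pi^T)_{ij}=A_{\pi(i)\pi(j)}$. A matrix $S\in\mathbb{R}^{n\times n}$ is a strong-R-matrix (strong Robinson matrix) if it is symmetric and $S_{ij}\le S_{kl}$ for all $(i,j,k,l)$ with $|i-j|\ge|k-l|$; $\mathcal{R}^n$ denotes the set of such matrices. $\mathcal{M}_n(\delta,s)$ is the set of symmetric matrices $M\in\{0,1\}^{n\times n}$ such that $M_{ij}=1$ for all $(i,j)$ with $|i-j|\le\delta$ and the number of nonzero entries of $M$ equals $\big(n+(2n-1)\delta-\delta^2\big)+s$ (i.e. a full band of half-width $\delta$ plus $s$ additional out-of-band ones). *)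

theory Defs
  imports Complex_Main "HOL-Combinatorics.Permutations"
begin

text \<open>Matrices are functions nat \<Rightarrow> nat \<Rightarrow> real, only the entries with indices in {1..n} matter.
  A permutation matrix \<Pi> is represented by the permutation \<pi> of {1..n} with \<Pi>_ij = 1 iff \<pi> i = j,
  so that (\<Pi> A \<Pi>^T)_ij = A (\<pi> i) (\<pi> j).\<close>

definition perm_conj :: "(nat \<Rightarrow> nat) \<Rightarrow> (nat \<Rightarrow> nat \<Rightarrow> real) \<Rightarrow> (nat \<Rightarrow> nat \<Rightarrow> real)" where
  "perm_conj \<pi> A = (\<lambda>i j. A (\<pi> i) (\<pi> j))"

definition symmetric_mat :: "nat \<Rightarrow> (nat \<Rightarrow> nat \<Rightarrow> real) \<Rightarrow> bool" where
  "symmetric_mat n A \<longleftrightarrow> (\<forall>i\<in>{1..n}. \<forall>j\<in>{1..n}. A i j = A j i)"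

definition strong_R :: "nat \<Rightarrow> (nat \<Rightarrow> nat \<Rightarrow> real) \<Rightarrow> bool" where
  "strong_R n S \<longleftrightarrow> symmetric_mat n S \<and>
     (\<forall>i\<in>{1..n}. \<forall>j\<in>{1..n}. \<forall>k\<in>{1..n}. \<forall>l\<in>{1..n}.
        \<bar>int i - int j\<bar> \<ge> \<bar>int k - int l\<bar> \<longrightarrow> S i j \<le> S k l)"

definition M_set :: "nat \<Rightarrow> nat \<Rightarrow> nat \<Rightarrow> (nat \<Rightarrow> nat \<Rightarrow> real) set" where
  "M_set n \<delta> s = {M. symmetric_mat n M \<and>
     (\<forall>i\<in>{1..n}. \<forall>j\<in>{1..n}. M i j \<in> {0, 1}) \<and>
     (\<forall>i\<in>{1..n}. \<forall>j\<in>{1..n}. \<bar>int i - int j\<bar> \<le> int \<delta> \<longrightarrow> M i j = 1) \<and>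
     int (card {(i, j). i \<in> {1..n} \<and> j \<in> {1..n} \<and> M i j \<noteq> 0})
        = (int n + (2 * int n - 1) * int \<delta> - int \<delta> ^ 2) + int s}"

definition l1_dist :: "nat \<Rightarrow> (nat \<Rightarrow> nat \<Rightarrow> real) \<Rightarrow> (nat \<Rightarrow> nat \<Rightarrow> real) \<Rightarrow> real" where
  "l1_dist n S B = (\<Sum>i=1..n. \<Sum>j=1..n. \<bar>S i j - B i j\<bar>)"

text \<open>R2SUM(\<lambda>) objective for a permutation vector x (x i = position of element i)\<close>
definition r2sum :: "nat \<Rightarrow> real \<Rightarrow> (nat \<Rightarrow> nat \<Rightarrow> real) \<Rightarrow> (nat \<Rightarrow> nat) \<Rightarrow> real" where
  "r2sum n lam A x = (\<Sum>i=1..n. \<Sum>j=1..n. A i j * min lam ((real (x i) - real (x j))^2))"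

end

theory Submission
  imports Defs
begin

definition bandset :: "nat \<Rightarrow> nat \<Rightarrow> (nat \<times> nat) set" where
  "bandset n d = {(i, j). i \<in> {1..n} \<and> j \<in> {1..n} \<and> \<bar>int i - int j\<bar> \<le> int d}"

definition onesset :: "nat \<Rightarrow> (nat \<Rightarrow> nat \<Rightarrow> real) \<Rightarrow> (nat \<times> nat) set" where
  "onesset n C = {(i, j). i \<in> {1..n} \<and> j \<in> {1..n} \<and> C i j \<noteq> 0}"

lemma bandset_sub: "bandset n d \<subseteq> {1..n} \<times> {1..n}" by (auto simp: bandset_def)
lemma onesset_sub: "onesset n C \<subseteq> {1..n} \<times> {1..n}" by (auto simp: onesset_def)
lemma fin_bandset[simp]: "finite (bandset n d)" by (rule finite_subset[OF bandset_sub]) auto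
lemma fin_onesset[simp]: "finite (onesset n C)" by (rule finite_subset[OF onesset_sub]) auto

lemma band_card:
  assumes "d \<le> n"
  shows "int (card (bandset n d)) = int n + (2 * int n - 1) * int d - int d ^ 2"
  using assms
proof (induction n rule: nat_induct_at_least)
  case base
  have "bandset d d = {1..d} \<times> {1..d}" by (auto simp: bandset_def)
  then show ?case by (simp add: power2_eq_square algebra_simps)
next
  case (Suc n)
  have eq: "bandset (Suc n) d = bandset n d \<union> ({Suc n} \<times> {Suc n - d..Suc n}) \<union> ({Suc n - d..n} \<times> {Suc n})"
    using Suc.hyps by (auto simp: bandset_def)
  have d1: "bandset n d \<inter> ({Suc n} \<times> {Suc n - d..Suc n}) = {}" by (auto simp: bandset_def)
  have d2: "(bandset n d \<union> ({Suc n} \<times> {Suc n - d..Suc n})) \<inter> ({Suc n - d..n} \<times> {Suc n}) = {}" by (auto simp: bandset_def)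
  have "card (bandset (Suc n) d) = card (bandset n d) + card ({Suc n} \<times> {Suc n - d..Suc n}) + card ({Suc n - d..n} \<times> {Suc n})"
    unfolding eq by (simp add: card_Un_disjoint d1 d2)
  also have "\<dots> = card (bandset n d) + (d + 1) + d" using Suc.hyps by (simp add: card_cartesian_product)
  finally show ?case using Suc.IH by (simp add: algebra_simps power2_eq_square)
qed


lemma count_lemma:
  assumes "card (onesset n C) = card (bandset n d) + s"
  shows "card (onesset n C - bandset n d) = card (bandset n d - onesset n C) + s"
proof -
  have a: "card (onesset n C) = card (onesset n C \<inter> bandset n d) + card (onesset n C - bandset n d)"
    by (metis card_Int_Diff fin_onesset)
  have b: "card (bandset n d) = card (onesset n C \<inter> bandset n d) + card (bandset n d - onesset n C)"
    by (metis card_Int_Diff fin_bandset inf_commute)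
  show ?thesis using a b assms by linarith
qed

lemma pin:
  assumes "\<sigma> permutes {1..n}" "1 \<le> i" "i \<le> n"
  shows "1 \<le> \<sigma> i \<and> \<sigma> i \<le> n"
  using assms permutes_in_image[OF assms(1), of i] by auto

lemma pin1: "\<sigma> permutes {Suc 0..n} \<Longrightarrow> Suc 0 \<le> i \<Longrightarrow> i \<le> n \<Longrightarrow> Suc 0 \<le> \<sigma> i"
  using pin[of \<sigma> n i] by simp
lemma pin2: "\<sigma> permutes {Suc 0..n} \<Longrightarrow> Suc 0 \<le> i \<Longrightarrow> i \<le> n \<Longrightarrow> \<sigma> i \<le> n"
  using pin[of \<sigma> n i] by simp

lemma ones_perm:
  assumes "\<sigma> permutes {1..n}"
  shows "card (onesset n (perm_conj \<sigma> A)) = card (onesset n A)"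
proof -
  have inj: "inj \<sigma>" using assms permutes_inj by blast
  have img: "map_prod \<sigma> \<sigma> ` onesset n (perm_conj \<sigma> A) = onesset n A"
  proof
    show "map_prod \<sigma> \<sigma> ` onesset n (perm_conj \<sigma> A) \<subseteq> onesset n A"
    proof
      fix e assume "e \<in> map_prod \<sigma> \<sigma> ` onesset n (perm_conj \<sigma> A)"
      then obtain k l where e: "e = (\<sigma> k, \<sigma> l)" and kl: "k \<in> {1..n}" "l \<in> {1..n}" "A (\<sigma> k) (\<sigma> l) \<noteq> 0"
        by (auto simp: onesset_def perm_conj_def)
      have "\<sigma> k \<in> {1..n}" "\<sigma> l \<in> {1..n}" using kl pin[OF assms] by auto
      then show "e \<in> onesset n A" using e kl by (simp add: onesset_def)
    qed
  next
    show "onesset n A \<subseteq> map_prod \<sigma> \<sigma> ` onesset n (perm_conj \<sigma> A)"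
    proof
      fix e assume e: "e \<in> onesset n A"
      obtain i j where ij: "e = (i, j)" by force
      let ?k = "inv \<sigma> i" and ?l = "inv \<sigma> j"
      have s1: "\<sigma> ?k = i" "\<sigma> ?l = j" using assms permutes_inverses(1) by metis+
      have pi: "inv \<sigma> permutes {1..n}" using assms permutes_inv by blast
      moreover have "i \<in> {1..n}" "j \<in> {1..n}" using e ij by (auto simp: onesset_def)
      ultimately have "?k \<in> {1..n}" "?l \<in> {1..n}" using pin[OF pi] by auto
      moreover have "A i j \<noteq> 0" using e ij by (simp add: onesset_def)
      ultimately have kl: "(?k, ?l) \<in> onesset n (perm_conj \<sigma> A)" using s1
        by (simp add: onesset_def perm_conj_def)
      have ee: "e = map_prod \<sigma> \<sigma> (?k, ?l)" using s1 ij by simp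
      show "e \<in> map_prod \<sigma> \<sigma> ` onesset n (perm_conj \<sigma> A)" unfolding ee using kl by (rule imageI)
    qed
  qed
  have ij2: "inj_on (map_prod \<sigma> \<sigma>) X" for X
  proof (rule inj_onI)
    fix a b assume "map_prod \<sigma> \<sigma> a = map_prod \<sigma> \<sigma> b"
    then have "\<sigma> (fst a) = \<sigma> (fst b)" "\<sigma> (snd a) = \<sigma> (snd b)" by (simp_all add: map_prod_def split_beta)
    then have "fst a = fst b" "snd a = snd b" using inj by (simp_all add: inj_eq)
    then show "a = b" by (simp add: prod_eq_iff)
  qed
  show ?thesis using card_image[OF ij2, of "onesset n (perm_conj \<sigma> A)"] img by simp
qed

lemma zo_perm:
  assumes "\<sigma> permutes {1..n}" "\<forall>i\<in>{1..n}. \<forall>j\<in>{1..n}. A i j \<in> {0, 1}"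
  shows "\<forall>i\<in>{1..n}. \<forall>j\<in>{1..n}. perm_conj \<sigma> A i j \<in> {0, 1}"
proof (intro ballI)
  fix i j assume "i \<in> {1..n}" "j \<in> {1..n}"
  then have "\<sigma> i \<in> {1..n}" "\<sigma> j \<in> {1..n}" using pin[OF assms(1)] by auto
  then show "perm_conj \<sigma> A i j \<in> {0, 1}" using assms(2) by (simp add: perm_conj_def)
qed


lemma sR_facts:
  assumes SR: "strong_R n S" and dn: "d + 2 \<le> n" and i: "i \<in> {1..n}" and j: "j \<in> {1..n}"
  shows "\<bar>int i - int j\<bar> \<le> int d + 1 \<Longrightarrow> S 1 (d+2) \<le> S i j"
    and "\<bar>int i - int j\<bar> \<ge> int d + 1 \<Longrightarrow> S i j \<le> S 1 (d+2)"
proof -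
  have p: "1 \<in> {1..n}" "d + 2 \<in> {1..n}" using dn by auto
  have a: "\<bar>int 1 - int (d+2)\<bar> = int d + 1" by simp
  from SR have m: "\<forall>i\<in>{1..n}. \<forall>j\<in>{1..n}. \<forall>k\<in>{1..n}. \<forall>l\<in>{1..n}.
        \<bar>int i - int j\<bar> \<ge> \<bar>int k - int l\<bar> \<longrightarrow> S i j \<le> S k l" by (simp add: strong_R_def)
  show "\<bar>int i - int j\<bar> \<le> int d + 1 \<Longrightarrow> S 1 (d+2) \<le> S i j"
    using m p i j a by metis
  show "\<bar>int i - int j\<bar> \<ge> int d + 1 \<Longrightarrow> S i j \<le> S 1 (d+2)"
    using m p i j a by metis
qed

lemma l1_lower:
  assumes SR: "strong_R n S" and zo: "\<forall>i\<in>{1..n}. \<forall>j\<in>{1..n}. C i j \<in> {0,1}"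
    and cnt: "card (onesset n C) = card (bandset n d) + s" and sl: "s + d + 1 \<le> n"
  shows "real s \<le> l1_dist n S C"
proof (cases "s = 0")
  case True then show ?thesis by (simp add: l1_dist_def sum_nonneg)
next
  case False
  let ?U = "{1..n} \<times> {1..n}"
  have l1eq: "l1_dist n S C = (\<Sum>e\<in>?U. \<bar>S (fst e) (snd e) - C (fst e) (snd e)\<bar>)"
    unfolding l1_dist_def by (simp add: sum.cartesian_product split_beta)
  define L where "L = n - d - 1"
  have L: "s \<le> L" "1 \<le> L" "L + d + 1 = n" "d + 2 \<le> n" using sl False by (auto simp: L_def)
  define b where "b = S 1 (d+2)"
  define \<beta> where "\<beta> = max 0 (min 1 b)"
  have \<beta>01: "0 \<le> \<beta>" "\<beta> \<le> 1" by (auto simp: \<beta>_def)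
  define Z1 where "Z1 = bandset n d - onesset n C"
  define Ou where "Ou = onesset n C - bandset n d"
  define Lay where "Lay = (\<lambda>i. (i, i+d+1)) ` {1..L} \<union> (\<lambda>i. (i+d+1, i)) ` {1..L}"
  define Z2 where "Z2 = Lay - onesset n C"
  have LayU: "Lay \<subseteq> ?U" using L by (auto simp: Lay_def)
  have Layb: "Lay \<inter> bandset n d = {}" by (auto simp: Lay_def bandset_def)
  have Laydist: "\<bar>int (fst e) - int (snd e)\<bar> = int d + 1" if "e \<in> Lay" for e
    using that by (auto simp: Lay_def)
  have Z1U: "Z1 \<subseteq> ?U" by (auto simp: Z1_def bandset_def)
  have OuU: "Ou \<subseteq> ?U" by (auto simp: Ou_def onesset_def)
  have Z2U: "Z2 \<subseteq> ?U" using LayU by (auto simp: Z2_def)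
  have key: "\<beta> * of_bool (e \<in> Z1) + (1 - \<beta>) * of_bool (e \<in> Ou) + \<beta> * of_bool (e \<in> Z2)
      \<le> \<bar>S (fst e) (snd e) - C (fst e) (snd e)\<bar>" if eU: "e \<in> ?U" for e
  proof -
    obtain i j where e: "e = (i, j)" by force
    have ij: "i \<in> {1..n}" "j \<in> {1..n}" using eU e by auto
    note f1 = sR_facts(1)[OF SR L(4) ij] and f2 = sR_facts(2)[OF SR L(4) ij]
    have Cv: "C i j = 0 \<or> C i j = 1" using zo ij by auto
    consider "e \<in> Z1" | "e \<in> Ou" | "e \<in> Z2" | "e \<notin> Z1 \<and> e \<notin> Ou \<and> e \<notin> Z2" by blast
    then show ?thesis
    proof cases
      case 1
      then have c: "C i j = 0" and bd: "\<bar>int i - int j\<bar> \<le> int d" using ij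
        by (auto simp: Z1_def onesset_def bandset_def e)
      have n2: "e \<notin> Ou" "e \<notin> Z2" using 1 Layb by (auto simp: Z1_def Ou_def Z2_def)
      have "b \<le> S i j" using f1 bd by (simp add: b_def)
      then show ?thesis using 1 n2 c by (simp add: e \<beta>_def)
    next
      case 2
      then have c: "C i j = 1" and bd: "\<bar>int i - int j\<bar> \<ge> int d + 1" using ij Cv
        by (auto simp: Ou_def onesset_def bandset_def e)
      have n2: "e \<notin> Z1" "e \<notin> Z2" using 2 by (auto simp: Z1_def Ou_def Z2_def)
      have "S i j \<le> b" using f2 bd by (simp add: b_def)
      then show ?thesis using 2 n2 c by (simp add: e \<beta>_def)
    next
      case 3
      then have c: "C i j = 0" and bd: "\<bar>int i - int j\<bar> = int d + 1" using ij Laydist[of e]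
        by (auto simp: Z2_def onesset_def e)
      have n2: "e \<notin> Z1" "e \<notin> Ou" using 3 Layb by (auto simp: Z1_def Ou_def Z2_def)
      have "b \<le> S i j" using f1 bd by (simp add: b_def)
      then show ?thesis using 3 n2 c by (simp add: e \<beta>_def)
    next
      case 4
      then show ?thesis by simp
    qed
  qed
  have sumeq: "(\<Sum>e\<in>?U. \<beta> * of_bool (e \<in> Z1) + (1 - \<beta>) * of_bool (e \<in> Ou) + \<beta> * of_bool (e \<in> Z2))
      = \<beta> * card Z1 + (1 - \<beta>) * card Ou + \<beta> * card Z2"
  proof -
    have "?U \<inter> {e. e \<in> Z1} = Z1" "?U \<inter> {e. e \<in> Ou} = Ou" "?U \<inter> {e. e \<in> Z2} = Z2"
      using Z1U OuU Z2U by auto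
    then show ?thesis by (simp add: sum.distrib sum_distrib_left[symmetric])
  qed
  have co: "card Ou = card Z1 + s" using count_lemma[OF cnt] by (simp add: Ou_def Z1_def)
  have cLay: "card Lay = 2 * L"
  proof -
    have i1: "inj_on (\<lambda>i. (i, i+d+1)) {1..L}" "inj_on (\<lambda>i. (i+d+1, i)) {1..L}" by (auto simp: inj_on_def)
    have dj: "(\<lambda>i. (i, i+d+1)) ` {1..L} \<inter> (\<lambda>i. (i+d+1, i)) ` {1..L} = {}" by auto
    have "card Lay = card ((\<lambda>i. (i, i+d+1)) ` {1..L}) + card ((\<lambda>i. (i+d+1, i)) ` {1..L})"
      unfolding Lay_def by (rule card_Un_disjoint) (use dj in auto)
    also have "\<dots> = L + L" using card_image[OF i1(1)] card_image[OF i1(2)] by simp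
    finally show ?thesis by simp
  qed
  have "Lay \<subseteq> Z2 \<union> Ou" using Layb by (auto simp: Z2_def Ou_def)
  moreover have "finite (Z2 \<union> Ou)" using Z2U OuU by (auto intro: finite_subset)
  ultimately have "card Lay \<le> card (Z2 \<union> Ou)" by (rule card_mono[rotated])
  then have "card Lay \<le> card Z2 + card Ou" using card_Un_le[of Z2 Ou] by linarith
  then have cZ2: "real (card Z2) \<ge> 2 * real L - real (card Ou)" using cLay by linarith
  have A1: "\<beta> * (card Z1 + card Z2) \<ge> \<beta> * s"
    using cZ2 co L(1) \<beta>01 by (intro mult_left_mono) auto
  have A2: "(1 - \<beta>) * card Ou \<ge> (1 - \<beta>) * s"
    using co \<beta>01 by (intro mult_left_mono) auto
  have "real s \<le> \<beta> * card Z1 + (1 - \<beta>) * card Ou + \<beta> * card Z2"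
    using A1 A2 by (simp add: algebra_simps)
  also have "\<dots> \<le> l1_dist n S C"
    unfolding l1eq sumeq[symmetric] by (rule sum_mono) (rule key)
  finally show ?thesis .
qed


definition hfun :: "nat \<Rightarrow> nat \<times> nat \<Rightarrow> real" where
  "hfun d e = min (real (d^2)) ((real (fst e) - real (snd e))^2)"

lemma h_out:
  assumes "e \<in> {1..n} \<times> {1..n}" "e \<notin> bandset n d"
  shows "hfun d e = real (d^2)"
proof -
  obtain i j where e: "e = (i, j)" by force
  have "\<bar>int i - int j\<bar> > int d" using assms e by (auto simp: bandset_def)
  then have "\<bar>real i - real j\<bar> \<ge> real d" by linarith
  then have "real d ^ 2 \<le> \<bar>real i - real j\<bar> ^ 2" by (intro power_mono) auto
  then show ?thesis by (simp add: hfun_def e)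
qed

lemma r2_lower:
  assumes IU: "I \<subseteq> {1..n} \<times> {1..n}" and cI: "card I = card (bandset n d) + s"
  shows "sum (hfun d) (bandset n d) + real (d^2) * s \<le> sum (hfun d) I"
    and "bandset n d \<subseteq> I \<Longrightarrow> sum (hfun d) I = sum (hfun d) (bandset n d) + real (d^2) * s"
proof -
  let ?B = "bandset n d"
  have fI: "finite I" using IU by (rule finite_subset) auto
  have s1: "sum (hfun d) I = sum (hfun d) (I \<inter> ?B) + sum (hfun d) (I - ?B)"
    using fI by (metis sum.Int_Diff)
  have s2: "sum (hfun d) (I - ?B) = real (d^2) * card (I - ?B)"
  proof -
    have "sum (hfun d) (I - ?B) = sum (\<lambda>_. real (d^2)) (I - ?B)"
    proof (rule sum.cong)
      fix e assume "e \<in> I - ?B"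
      then have "e \<in> {1..n} \<times> {1..n}" "e \<notin> ?B" using IU by blast+
      then show "hfun d e = real (d^2)" by (rule h_out)
    qed simp
    then show ?thesis by simp
  qed
  have s3: "sum (hfun d) ?B = sum (hfun d) (I \<inter> ?B) + sum (hfun d) (?B - I)"
    by (metis sum.Int_Diff fin_bandset inf_commute)
  have s4: "sum (hfun d) (?B - I) \<le> real (card (?B - I)) * real (d^2)"
    by (rule sum_bounded_above) (simp add: hfun_def)
  have c1: "card I = card (I \<inter> ?B) + card (I - ?B)" using fI by (metis card_Int_Diff)
  have c2: "card ?B = card (I \<inter> ?B) + card (?B - I)" by (metis card_Int_Diff fin_bandset inf_commute)
  have c3: "card (I - ?B) = card (?B - I) + s" using c1 c2 cI by linarith
  show "sum (hfun d) ?B + real (d^2) * s \<le> sum (hfun d) I"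
    using s1 s2 s3 s4 c3 by (simp add: algebra_simps)
  assume sub: "?B \<subseteq> I"
  then have em: "?B - I = {}" by auto
  then show "sum (hfun d) I = sum (hfun d) ?B + real (d^2) * s"
    using s1 s2 s3 c3 by (simp add: algebra_simps em)
qed

lemma r2_repr:
  assumes y: "bij_betw y {1..n} {1..n}" and zo: "\<forall>i\<in>{1..n}. \<forall>j\<in>{1..n}. A i j \<in> {0,1}"
  shows "r2sum n (real (d^2)) A y = sum (hfun d) (map_prod y y ` onesset n A)"
    and "card (map_prod y y ` onesset n A) = card (onesset n A)"
    and "map_prod y y ` onesset n A \<subseteq> {1..n} \<times> {1..n}"
proof -
  have inj: "inj_on (map_prod y y) (onesset n A)"
  proof (rule inj_onI)
    fix a b assume a: "a \<in> onesset n A" and b: "b \<in> onesset n A" and eq: "map_prod y y a = map_prod y y b"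
    have "y (fst a) = y (fst b)" "y (snd a) = y (snd b)" using eq by (simp_all add: map_prod_def split_beta)
    moreover have "fst a \<in> {1..n}" "snd a \<in> {1..n}" "fst b \<in> {1..n}" "snd b \<in> {1..n}"
      using a b by (auto simp: onesset_def)
    ultimately have "fst a = fst b" "snd a = snd b" using y by (metis bij_betw_def inj_on_def)+
    then show "a = b" by (simp add: prod_eq_iff)
  qed
  show "card (map_prod y y ` onesset n A) = card (onesset n A)" using inj by (rule card_image)
  show "map_prod y y ` onesset n A \<subseteq> {1..n} \<times> {1..n}"
  proof
    fix e assume "e \<in> map_prod y y ` onesset n A"
    then obtain i j where e: "e = (y i, y j)" and ij: "i \<in> {1..n}" "j \<in> {1..n}"
      by (auto simp: onesset_def)
    have "y i \<in> {1..n}" "y j \<in> {1..n}" using y ij by (metis bij_betw_apply)+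
    then show "e \<in> {1..n} \<times> {1..n}" using e by simp
  qed
  have "r2sum n (real (d^2)) A y = (\<Sum>e\<in>{1..n}\<times>{1..n}. A (fst e) (snd e) * hfun d (map_prod y y e))"
    unfolding r2sum_def hfun_def by (simp add: sum.cartesian_product split_beta)
  also have "\<dots> = (\<Sum>e\<in>onesset n A. hfun d (map_prod y y e))"
  proof -
    have "(\<Sum>e\<in>{1..n}\<times>{1..n}. A (fst e) (snd e) * hfun d (map_prod y y e))
        = (\<Sum>e\<in>onesset n A. A (fst e) (snd e) * hfun d (map_prod y y e))"
      by (rule sum.mono_neutral_right) (auto simp: onesset_def)
    also have "\<dots> = (\<Sum>e\<in>onesset n A. hfun d (map_prod y y e))"
    proof (rule sum.cong)
      fix e assume "e \<in> onesset n A"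
      then have m: "fst e \<in> {1..n}" "snd e \<in> {1..n}" "A (fst e) (snd e) \<noteq> 0" by (auto simp: onesset_def)
      then have "A (fst e) (snd e) \<in> {0,1}" using zo by blast
      then have "A (fst e) (snd e) = 1" using m(3) by simp
      then show "A (fst e) (snd e) * hfun d (map_prod y y e) = hfun d (map_prod y y e)" by simp
    qed simp
    finally show ?thesis .
  qed
  also have "\<dots> = sum (hfun d) (map_prod y y ` onesset n A)"
    using sum.reindex[OF inj, of "hfun d"] by (simp add: comp_def)
  finally show "r2sum n (real (d^2)) A y = sum (hfun d) (map_prod y y ` onesset n A)" .
qed


theorem proposition1:
  fixes n \<delta> s :: nat and A :: "nat \<Rightarrow> nat \<Rightarrow> real" and \<pi> :: "nat \<Rightarrow> nat"
  assumes "n \<ge> 1"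
    and "int s \<le> int n - int \<delta> - 1"
    and "symmetric_mat n A"
    and "\<pi> permutes {1..n}"
    and "perm_conj \<pi> A \<in> M_set n \<delta> s"
  shows "(\<exists>S. strong_R n S \<and>
            (\<forall>\<pi>' S'. \<pi>' permutes {1..n} \<and> strong_R n S' \<longrightarrow>
               l1_dist n S (perm_conj \<pi> A) \<le> l1_dist n S' (perm_conj \<pi>' A)))
       \<and> (\<forall>x. (\<forall>k\<in>{1..n}. x (\<pi> k) = k) \<longrightarrow>
            (\<forall>y. bij_betw y {1..n} {1..n} \<longrightarrow>
               r2sum n (real (\<delta>^2)) A x \<le> r2sum n (real (\<delta>^2)) A y))"
proof -
  define B where "B = perm_conj \<pi> A"
  have sl: "s + \<delta> + 1 \<le> n" using assms(2) by linarith
  have Bm: "B \<in> M_set n \<delta> s" using assms(5) B_def by simp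
  have zoB: "\<forall>i\<in>{1..n}. \<forall>j\<in>{1..n}. B i j \<in> {0, 1}" using Bm by (simp add: M_set_def)
  have band1: "\<forall>i\<in>{1..n}. \<forall>j\<in>{1..n}. \<bar>int i - int j\<bar> \<le> int \<delta> \<longrightarrow> B i j = 1"
    using Bm by (simp add: M_set_def)
  have cB0: "int (card (onesset n B)) = (int n + (2 * int n - 1) * int \<delta> - int \<delta> ^ 2) + int s"
    using Bm by (simp add: M_set_def onesset_def)
  have cB: "card (onesset n B) = card (bandset n \<delta>) + s"
    using cB0 band_card[of \<delta> n] sl by linarith
  have pinv: "inv \<pi> permutes {1..n}" using assms(4) permutes_inv by blast
  have AB: "A i j = perm_conj (inv \<pi>) B i j" for i j
    using assms(4) by (simp add: B_def perm_conj_def permutes_inverses(1))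
  have zoA: "\<forall>i\<in>{1..n}. \<forall>j\<in>{1..n}. A i j \<in> {0, 1}"
    using zo_perm[OF pinv zoB] AB by simp
  have cA: "card (onesset n A) = card (bandset n \<delta>) + s"
    using ones_perm[OF assms(4), of A] cB B_def by simp
  have part1: "\<exists>S. strong_R n S \<and>
            (\<forall>\<pi>' S'. \<pi>' permutes {1..n} \<and> strong_R n S' \<longrightarrow>
               l1_dist n S (perm_conj \<pi> A) \<le> l1_dist n S' (perm_conj \<pi>' A))"
  proof (intro exI conjI allI impI)
    define S0 :: "nat \<Rightarrow> nat \<Rightarrow> real" where
      "S0 = (\<lambda>i j. if \<bar>int i - int j\<bar> \<le> int \<delta> then 1 else 0)"
    show "strong_R n S0" by (auto simp: strong_R_def symmetric_mat_def S0_def abs_minus_commute)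
    have "l1_dist n S0 B = (\<Sum>e\<in>{1..n}\<times>{1..n}. of_bool (e \<in> onesset n B - bandset n \<delta>))"
    proof -
      have "l1_dist n S0 B = (\<Sum>e\<in>{1..n}\<times>{1..n}. \<bar>S0 (fst e) (snd e) - B (fst e) (snd e)\<bar>)"
        unfolding l1_dist_def by (simp add: sum.cartesian_product split_beta)
      also have "\<dots> = (\<Sum>e\<in>{1..n}\<times>{1..n}. of_bool (e \<in> onesset n B - bandset n \<delta>))"
      proof (rule sum.cong)
      fix e assume e: "e \<in> {1..n} \<times> {1..n}"
      then have "fst e \<in> {1..n}" "snd e \<in> {1..n}" by auto
      then have "B (fst e) (snd e) \<in> {0,1}" using zoB by blast
      then show "\<bar>S0 (fst e) (snd e) - B (fst e) (snd e)\<bar> = of_bool (e \<in> onesset n B - bandset n \<delta>)"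
        using e band1 by (auto simp: S0_def onesset_def bandset_def split_beta)
    qed simp
    finally show ?thesis .
    qed
    also have "\<dots> = real (card (onesset n B - bandset n \<delta>))"
    proof -
      have "{1..n}\<times>{1..n} \<inter> {e. e \<in> onesset n B - bandset n \<delta>} = onesset n B - bandset n \<delta>"
        by (auto simp: onesset_def)
      then show ?thesis by simp
    qed
    also have "\<dots> = real s"
    proof -
      have "bandset n \<delta> - onesset n B = {}" using band1 by (auto simp: bandset_def onesset_def)
      then show ?thesis using count_lemma[OF cB] by simp
    qed
    finally have l0: "l1_dist n S0 B = real s" .
    fix \<pi>' S' assume h: "\<pi>' permutes {1..n} \<and> strong_R n S'"
    have "real s \<le> l1_dist n S' (perm_conj \<pi>' A)"
      by (rule l1_lower[OF _ zo_perm[OF _ zoA] _ sl]) (use h ones_perm[of \<pi>' n A] cA in auto)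
    then show "l1_dist n S0 (perm_conj \<pi> A) \<le> l1_dist n S' (perm_conj \<pi>' A)"
      using l0 B_def by simp
  qed
  have part2: "\<forall>x. (\<forall>k\<in>{1..n}. x (\<pi> k) = k) \<longrightarrow>
            (\<forall>y. bij_betw y {1..n} {1..n} \<longrightarrow>
               r2sum n (real (\<delta>^2)) A x \<le> r2sum n (real (\<delta>^2)) A y)"
  proof (intro allI impI)
    fix x y assume hx: "\<forall>k\<in>{1..n}. x (\<pi> k) = k" and hy: "bij_betw y {1..n} {1..n}"
    have xinv: "x i = inv \<pi> i" if "i \<in> {1..n}" for i
    proof -
      have "inv \<pi> i \<in> {1..n}" using pin[OF pinv] that by auto
      moreover have "\<pi> (inv \<pi> i) = i" using assms(4) permutes_inverses(1) by metis
      ultimately show ?thesis using hx by metis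
    qed
    have bx: "bij_betw x {1..n} {1..n}"
      using permutes_imp_bij[OF pinv] xinv by (metis bij_betw_cong)
    note rx = r2_repr(1)[OF bx zoA, of \<delta>] r2_repr(2,3)[OF bx zoA]
      and ry = r2_repr(1)[OF hy zoA, of \<delta>] r2_repr(2,3)[OF hy zoA]
    have sub: "bandset n \<delta> \<subseteq> map_prod x x ` onesset n A"
    proof
      fix e assume e: "e \<in> bandset n \<delta>"
      obtain k l where kl: "e = (k, l)" by force
      have k: "k \<in> {1..n}" "l \<in> {1..n}" and dl: "\<bar>int k - int l\<bar> \<le> int \<delta>"
        using e kl by (auto simp: bandset_def)
      have "B k l = 1" using band1 k dl by blast
      moreover have "\<pi> k \<in> {1..n}" "\<pi> l \<in> {1..n}" using k pin[OF assms(4)] by auto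
      ultimately have "(\<pi> k, \<pi> l) \<in> onesset n A" by (simp add: onesset_def B_def perm_conj_def)
      moreover have "e = map_prod x x (\<pi> k, \<pi> l)" using kl hx k by simp
      ultimately show "e \<in> map_prod x x ` onesset n A" by (metis imageI)
    qed
    have "r2sum n (real (\<delta>^2)) A x = sum (hfun \<delta>) (bandset n \<delta>) + real (\<delta>^2) * s"
      using rx r2_lower(2)[OF rx(3) _ sub] cA by simp
    also have "\<dots> \<le> r2sum n (real (\<delta>^2)) A y"
      using ry r2_lower(1)[OF ry(3)] cA by simp
    finally show "r2sum n (real (\<delta>^2)) A x \<le> r2sum n (real (\<delta>^2)) A y" .
  qed
  show ?thesis using part1 part2 by blast
qed

end
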